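(* Assume (H1) and (H2). Then, as $z\to\infty$: (i) $q(z)\,|\mathfrak m'(z)|=2q(z)e^{\gamma(z)}\int_z^\infty e^{-\gamma(\xi)}d\xi\to1$; (ii) $\mathfrak m(z)/M(z)\to1$, where $M(z)=\int_z^\infty dy/q(y)$ (finite for large $z$); (iii) $\dfrac{\int_z^\infty e^{\gamma(y)}\big(\int_y^\infty e^{-\gamma(\xi)}d\xi\big)^2dy}{e^{2\gamma(z)}\big(\int_z^\infty e^{-\gamma(\xi)}d\xi\big)^3}\to1$; (iv) $\dfrac{8\int_z^\infty e^{\gamma(y)}\int_y^\infty e^{\gamma(\eta)}\big(\int_\eta^\infty e^{-\gamma(\xi)}d\xi\big)^2d\eta\,dy}{\int_z^\infty q(y)^{-3}dy}\to1$.
   Context: Let $q\in C^1([0,\infty))$ and $\gamma(y)=2\int_0^yq$. (H1): $\int_0^\infty e^{\gamma(y)}\int_y^\infty e^{-\gamma(\xi)}d\xi\,dy<\infty$. (H2): $\lim_{x\to\infty}q(x)=\infty$ and $\lim_{x\to\infty}q'(x)/q(x)^2=0$. $\mathfrak m(z)=2\int_z^\infty e^{\gamma(y)}\int_y^\infty e^{-\gamma(\xi)}d\xi\,dy$, so $\mathfrak m'(z)=-2e^{\gamma(z)}\int_z^\infty e^{-\gamma(\xi)}d\xi$. *)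

theory Defs
  imports "HOL-Analysis.Analysis"
begin

definition gam :: "(real \<Rightarrow> real) \<Rightarrow> real \<Rightarrow> real" where
  "gam q y = 2 * integral {0..y} q"

definition tailE :: "(real \<Rightarrow> real) \<Rightarrow> real \<Rightarrow> real" where
  "tailE q y = integral {y..} (\<lambda>\<xi>. exp (- gam q \<xi>))"

definition frak_m :: "(real \<Rightarrow> real) \<Rightarrow> real \<Rightarrow> real" where
  "frak_m q z = 2 * integral {z..} (\<lambda>y. exp (gam q y) * tailE q y)"

definition bigM :: "(real \<Rightarrow> real) \<Rightarrow> real \<Rightarrow> real" where
  "bigM q z = integral {z..} (\<lambda>y. 1 / q y)"

end

theory Submission
  imports Defs
begin


lemma int_subset_nonneg:
  fixes h :: "real \<Rightarrow> real"
  assumes "h integrable_on {a..}" "\<And>y. y \<ge> a \<Longrightarrow> h y \<ge> 0" "a \<le> z"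
  shows "h integrable_on {z..}"
proof -
  have "h absolutely_integrable_on {a..}"
    by (rule nonnegative_absolutely_integrable_1) (use assms in auto)
  then have "h absolutely_integrable_on {z..}"
    by (rule set_integrable_subset) (use assms in auto)
  then show ?thesis by (simp add: absolutely_integrable_on_def)
qed

lemma int_split:
  fixes h :: "real \<Rightarrow> real"
  assumes "h integrable_on {a..}" "\<And>y. y \<ge> a \<Longrightarrow> h y \<ge> 0" "a \<le> z"
  shows "integral {a..} h = integral {a..z} h + integral {z..} h"
proof -
  have i1: "h integrable_on {a..z}"
    by (rule integrable_on_subinterval[OF assms(1)]) auto
  have i2: "h integrable_on {z..}" by (rule int_subset_nonneg[OF assms])
  have "(h has_integral (integral {a..z} h + integral {z..} h)) ({a..z} \<union> {z..})"
    by (rule has_integral_Un) (use i1 i2 in \<open>auto intro: negligible_subset[of "{z}"]\<close>)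
  moreover have "{a..z} \<union> {z..} = {a..}" using assms(3) by auto
  ultimately show ?thesis by (simp add: integral_unique)
qed

lemma tail_deriv:
  fixes h :: "real \<Rightarrow> real"
  assumes "continuous_on {a..} h" "h integrable_on {a..}" "\<And>y. y \<ge> a \<Longrightarrow> h y \<ge> 0" "a < y"
  shows "((\<lambda>t. integral {t..} h) has_real_derivative - h y) (at y)"
proof -
  have "((\<lambda>t. integral {a..t} h) has_real_derivative h y) (at y within {a..y+1})"
    by (rule integral_has_real_derivative) (use assms in \<open>auto intro: continuous_on_subset\<close>)
  moreover have "at y within {a..y+1} = at y"
    by (rule at_within_interior) (use assms in auto)
  ultimately have "((\<lambda>t. integral {a..t} h) has_real_derivative h y) (at y)" by simp
  then have "((\<lambda>t. integral {a..} h - integral {a..t} h) has_real_derivative (0 - h y)) (at y)"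
    by (intro DERIV_diff DERIV_const)
  then have "((\<lambda>t. integral {a..} h - integral {a..t} h) has_real_derivative (- h y)) (at y)"
    by simp
  then show ?thesis
  proof (rule has_field_derivative_transform_within_open[where S="{a<..}"])
    show "integral {a..} h - integral {a..x} h = integral {x..} h" if "x \<in> {a<..}" for x
      using int_split[OF assms(2,3), of x] that by auto
  qed (use assms in auto)
qed

lemma ftc_inf:
  fixes G g :: "real \<Rightarrow> real"
  assumes der: "\<And>y. y \<ge> a \<Longrightarrow> (G has_real_derivative - g y) (at y)"
    and cont: "continuous_on {a..} g" and nn: "\<And>y. y \<ge> a \<Longrightarrow> g y \<ge> 0"
    and lim: "(G \<longlongrightarrow> 0) at_top"
  shows "(g has_integral G a) {a..}"
proof (rule has_integral_to_inf)
  show "g integrable_on {a..y}" for y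
  proof (cases "a \<le> y")
    case True
    then show ?thesis by (intro integrable_continuous_real continuous_on_subset[OF cont]) auto
  qed auto
  have eq: "integral {a..y} g = G a - G y" if "a \<le> y" for y
  proof -
    have "((\<lambda>x. - g x) has_integral (G y - G a)) {a..y}"
      by (rule fundamental_theorem_of_calculus[OF that])
        (use der in \<open>auto simp: has_real_derivative_iff_has_vector_derivative intro: has_vector_derivative_at_within\<close>)
    then have "(g has_integral (G a - G y)) {a..y}"
      using has_integral_neg[of "\<lambda>x. - g x" "G y - G a" "{a..y}"] by simp
    then show ?thesis by (rule integral_unique)
  qed
  have "((\<lambda>y. G a - G y) \<longlongrightarrow> G a - 0) at_top"
    by (intro tendsto_intros lim)
  show "((\<lambda>y. integral {a..y} g) \<longlongrightarrow> G a) at_top"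
  proof (rule Lim_transform_eventually)
    show "((\<lambda>y. G a - G y) \<longlongrightarrow> G a) at_top" using \<open>((\<lambda>y. G a - G y) \<longlongrightarrow> G a - 0) at_top\<close> by simp
    show "\<forall>\<^sub>F x in at_top. G a - G x = integral {a..x} g"
      using eq by (auto simp: eventually_at_top_linorder intro!: exI[of _ a])
  qed
qed (use nn in auto)

lemma int_pos:
  fixes g :: "real \<Rightarrow> real"
  assumes cont: "continuous_on {z..} g" and pos: "\<And>y. y \<ge> z \<Longrightarrow> g y > 0"
    and int: "g integrable_on {z..}"
  shows "integral {z..} g > 0"
proof -
  obtain x where x: "x \<in> {z..z+1}" "\<And>y. y \<in> {z..z+1} \<Longrightarrow> g x \<le> g y"
  proof -
    have "continuous_on {z..z+1} g" by (rule continuous_on_subset[OF cont]) auto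
    then show ?thesis using continuous_attains_inf[of "{z..z+1}" g] that by auto
  qed
  have i1: "g integrable_on {z..z+1}" by (rule integrable_on_subinterval[OF int]) auto
  have "integral {z..z+1} (\<lambda>_. g x) \<le> integral {z..z+1} g"
    by (rule integral_le) (use x i1 in auto)
  then have "g x \<le> integral {z..z+1} g" by simp
  moreover have "g x > 0" using pos x by auto
  moreover have "integral {z+1..} g \<ge> 0"
    by (rule integral_nonneg) (use int_subset_nonneg[OF int, of "z+1"] pos in \<open>auto simp: less_imp_le\<close>)
  moreover have "integral {z..} g = integral {z..z+1} g + integral {z+1..} g"
    by (rule int_split) (use int pos in \<open>auto simp: less_imp_le\<close>)
  ultimately show ?thesis by linarith
qed

lemma compare:
  fixes f g :: "real \<Rightarrow> real"
  assumes cf: "continuous_on {a..} f" and cg: "continuous_on {a..} g"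
    and intf: "f integrable_on {a..}"
    and pos: "\<And>y. y \<ge> a \<Longrightarrow> f y > 0 \<and> g y > 0"
    and lim: "((\<lambda>y. f y / g y) \<longlongrightarrow> 1) at_top"
  shows "eventually (\<lambda>z. g integrable_on {z..}) at_top \<and>
         ((\<lambda>z. integral {z..} f / integral {z..} g) \<longlongrightarrow> 1) at_top"
proof -
  have key: "\<exists>b\<ge>a. \<forall>y\<ge>b. \<bar>f y - g y\<bar> \<le> e * g y" if "e > 0" for e
  proof -
    have "eventually (\<lambda>y. dist (f y / g y) 1 < e) at_top"
      using lim that by (simp add: tendsto_iff)
    then obtain b where b: "\<And>y. y \<ge> b \<Longrightarrow> \<bar>f y / g y - 1\<bar> < e"
      by (auto simp: eventually_at_top_linorder dist_real_def)
    have "\<bar>f y - g y\<bar> \<le> e * g y" if "y \<ge> max a b" for y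
    proof -
      have gp: "g y > 0" using pos that by auto
      have "\<bar>f y / g y - 1\<bar> < e" using b that by auto
      moreover have "f y / g y - 1 = (f y - g y) / g y" using gp by (simp add: field_simps)
      ultimately have "\<bar>f y - g y\<bar> / g y < e" using gp by (simp add: abs_div)
      then show ?thesis using gp by (simp add: divide_less_eq)
    qed
    then show ?thesis by (intro exI[of _ "max a b"]) auto
  qed
  obtain b0 where b0: "b0 \<ge> a" "\<And>y. y \<ge> b0 \<Longrightarrow> \<bar>f y - g y\<bar> \<le> 1/2 * g y"
    using key[of "1/2"] by auto
  have intf': "f integrable_on {z..}" if "z \<ge> a" for z
    by (rule int_subset_nonneg[OF intf _ that]) (use pos in \<open>auto simp: less_imp_le\<close>)
  have intg: "g integrable_on {z..}" if "z \<ge> b0" for z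
  proof (rule measurable_bounded_by_integrable_imp_integrable_real)
    show "g \<in> borel_measurable (lebesgue_on {z..})"
      by (rule continuous_imp_measurable_on_sets_lebesgue)
        (use that b0 in \<open>auto intro: continuous_on_subset[OF cg]\<close>)
    show "(\<lambda>y. 2 * f y) integrable_on {z..}" using intf'[of z] that b0 by auto
    show "\<bar>g x\<bar> \<le> 2 * f x" if "x \<in> {z..}" for x
    proof -
      have "\<bar>f x - g x\<bar> \<le> 1/2 * g x" using b0(2)[of x] that \<open>z \<ge> b0\<close> by auto
      then show ?thesis using pos[of x] that \<open>z \<ge> b0\<close> b0(1) by arith
    qed
  qed auto
  have "((\<lambda>z. integral {z..} f / integral {z..} g) \<longlongrightarrow> 1) at_top"
    unfolding tendsto_iff
  proof (intro allI impI)
    fix e :: real assume e: "e > 0"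
    obtain b where b: "b \<ge> a" "\<And>y. y \<ge> b \<Longrightarrow> \<bar>f y - g y\<bar> \<le> (e/2) * g y"
      using key[of "e/2"] e by auto
    have "dist (integral {z..} f / integral {z..} g) 1 < e" if z: "z \<ge> max b b0" for z
    proof -
      have ig: "g integrable_on {z..}" using intg z by auto
      have iff: "f integrable_on {z..}" using intf' z b by auto
      have gpos: "integral {z..} g > 0"
        by (rule int_pos) (use ig pos z b in \<open>auto intro: continuous_on_subset[OF cg]\<close>)
      have "norm (integral {z..} (\<lambda>y. f y - g y)) \<le> integral {z..} (\<lambda>y. (e/2) * g y)"
        by (rule integral_norm_bound_integral) (use ig iff b z in \<open>auto intro: integrable_diff integrable_on_mult_right\<close>)
      then have "\<bar>integral {z..} f - integral {z..} g\<bar> \<le> (e/2) * integral {z..} g"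
        using ig iff by (simp add: integral_diff)
      then have "\<bar>(integral {z..} f - integral {z..} g) / integral {z..} g\<bar> \<le> e/2"
        using gpos by (simp add: abs_div divide_le_eq)
      moreover have "(integral {z..} f - integral {z..} g) / integral {z..} g
          = integral {z..} f / integral {z..} g - 1" using gpos by (simp add: field_simps)
      ultimately show ?thesis using e by (simp add: dist_real_def)
    qed
    then show "eventually (\<lambda>z. dist (integral {z..} f / integral {z..} g) 1 < e) at_top"
      unfolding eventually_at_top_linorder by (intro exI[of _ "max b b0"]) auto
  qed
  moreover have "eventually (\<lambda>z. g integrable_on {z..}) at_top"
    using intg by (auto simp: eventually_at_top_linorder)
  ultimately show ?thesis by simp
qed



locale setting =
  fixes q q' :: "real \<Rightarrow> real"
  assumes C1_deriv: "\<And>x. x \<ge> 0 \<Longrightarrow> (q has_real_derivative q' x) (at x within {0..})"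
    and C1_cont: "continuous_on {0..} q'"
    and H1_inner: "(\<lambda>\<xi>. exp (- gam q \<xi>)) integrable_on {0..}"
    and H1_outer: "(\<lambda>y. exp (gam q y) * tailE q y) integrable_on {0..}"
    and H2_q: "filterlim q at_top at_top"
    and H2_q': "((\<lambda>x. q' x / (q x)\<^sup>2) \<longlongrightarrow> 0) at_top"
begin

lemma qcont: "continuous_on {0..} q"
  unfolding continuous_on_eq_continuous_within
  using C1_deriv DERIV_continuous by blast

lemma qder: "y > 0 \<Longrightarrow> (q has_real_derivative q' y) (at y)"
  using C1_deriv[of y] at_within_interior[of y "{0..}"] by auto

lemma gamder: assumes "y > 0" shows "(gam q has_real_derivative 2 * q y) (at y)"
proof -
  have "((\<lambda>t. integral {0..t} q) has_real_derivative q y) (at y within {0..y+1})"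
    by (rule integral_has_real_derivative) (use assms in \<open>auto intro: continuous_on_subset[OF qcont]\<close>)
  moreover have "at y within {0..y+1} = at y"
    by (rule at_within_interior) (use assms in auto)
  ultimately have "((\<lambda>t. integral {0..t} q) has_real_derivative q y) (at y)" by simp
  then have "((\<lambda>t. 2 * integral {0..t} q) has_real_derivative 2 * q y) (at y)"
    by (rule DERIV_cmult)
  then show ?thesis unfolding gam_def[abs_def] .
qed

lemma gamcont: "y > 0 \<Longrightarrow> isCont (gam q) y"
  using gamder DERIV_isCont by blast

lemma gamcont_on: "a > 0 \<Longrightarrow> continuous_on {a..} (gam q)"
  by (intro continuous_at_imp_continuous_on ballI gamcont) auto

lemma Eder: "y > 0 \<Longrightarrow> ((\<lambda>t. exp (- gam q t)) has_real_derivative exp (- gam q y) * (- (2 * q y))) (at y)"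
  by (intro DERIV_chain2[OF DERIV_exp] DERIV_minus gamder)

lemma Econt: "a > 0 \<Longrightarrow> continuous_on {a..} (\<lambda>t. exp (- gam q t))"
  by (intro continuous_at_imp_continuous_on ballI DERIV_isCont[OF Eder]) auto

lemma Eint: "z \<ge> 0 \<Longrightarrow> (\<lambda>t. exp (- gam q t)) integrable_on {z..}"
  by (rule int_subset_nonneg[OF H1_inner]) auto

lemma Tder: assumes "y > 0" shows "(tailE q has_real_derivative - exp (- gam q y)) (at y)"
proof -
  have "((\<lambda>t. integral {t..} (\<lambda>t. exp (- gam q t))) has_real_derivative - exp (- gam q y)) (at y)"
    by (rule tail_deriv[of "y/2"]) (use assms Econt Eint in auto)
  then show ?thesis unfolding tailE_def[abs_def] .
qed

lemma Tcont: "a > 0 \<Longrightarrow> continuous_on {a..} (tailE q)"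
  by (intro continuous_at_imp_continuous_on ballI DERIV_isCont[OF Tder]) auto

lemma Tpos: "y > 0 \<Longrightarrow> tailE q y > 0"
  unfolding tailE_def by (rule int_pos) (use Econt Eint in auto)

lemma Tnn: "y \<ge> 0 \<Longrightarrow> tailE q y \<ge> 0"
  unfolding tailE_def by (rule integral_nonneg) (use Eint in auto)

lemma expgcont: "a > 0 \<Longrightarrow> continuous_on {a..} (\<lambda>t. exp (gam q t))"
  by (intro continuous_at_imp_continuous_on ballI continuous_intros gamcont) auto

lemma qcont': "a \<ge> 0 \<Longrightarrow> continuous_on {a..} q"
  by (rule continuous_on_subset[OF qcont]) auto

lemma q'cont': "a \<ge> 0 \<Longrightarrow> continuous_on {a..} q'"
  by (rule continuous_on_subset[OF C1_cont]) auto

lemma qlarge: "\<exists>A\<ge>1. \<forall>y\<ge>A. q y \<ge> 1"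
proof -
  have "eventually (\<lambda>y. q y \<ge> 1) at_top" using H2_q by (simp add: filterlim_at_top)
  then obtain A where "\<And>y. y \<ge> A \<Longrightarrow> q y \<ge> 1" by (auto simp: eventually_at_top_linorder)
  then show ?thesis by (intro exI[of _ "max A 1"]) auto
qed

lemma gam_mono: assumes "A0 > 0" "\<And>y. y \<ge> A0 \<Longrightarrow> q y \<ge> 1" "A0 \<le> y"
  shows "gam q A0 \<le> gam q y"
proof (rule DERIV_nonneg_imp_nondecreasing[OF assms(3)])
  fix x assume x: "A0 \<le> x" "x \<le> y"
  have "q x \<ge> 1" using assms(2) x by auto
  then show "\<exists>d. (gam q has_real_derivative d) (at x) \<and> 0 \<le> d"
    using gamder[of x] assms(1) x by (intro exI[of _ "2 * q x"]) auto
qed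

lemma part1: "((\<lambda>z. 2 * q z * exp (gam q z) * tailE q z) \<longlongrightarrow> 1) at_top"
proof -
  obtain A0 where A0: "A0 \<ge> 1" "\<And>y. y \<ge> A0 \<Longrightarrow> q y \<ge> 1" using qlarge by auto
  have "eventually (\<lambda>y. dist (q' y / (q y)^2) 0 < 1) at_top"
    using H2_q' by (simp add: tendsto_iff del: dist_0_norm)
  then obtain A1' where A1': "\<And>y. y \<ge> A1' \<Longrightarrow> \<bar>q' y / (q y)^2\<bar> < 1"
    by (auto simp: eventually_at_top_linorder dist_real_def)
  define A1 where "A1 = max A1' A0"
  have A1: "A1 \<ge> A0" "\<And>y. y \<ge> A1 \<Longrightarrow> \<bar>q' y / (q y)^2\<bar> < 1"
    using A1' unfolding A1_def by auto
  define G1 where "G1 y = exp (- gam q y) / (2 * q y)" for y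
  define g1 where "g1 y = exp (- gam q y) * (1 + q' y / (2 * (q y)^2))" for y
  have der: "(G1 has_real_derivative - g1 y) (at y)" if "y \<ge> A1" for y
  proof -
    have qy: "q y \<ge> 1" "y > 0" using that A1 A0 by auto
    have "(G1 has_real_derivative (exp (- gam q y) * (- (2 * q y)) * (2 * q y) - exp (- gam q y) * (2 * q' y)) / ((2 * q y) * (2 * q y))) (at y)"
      unfolding G1_def[abs_def] by (intro DERIV_divide Eder DERIV_cmult qder) (use qy in auto)
    moreover have "(exp (- gam q y) * (- (2 * q y)) * (2 * q y) - exp (- gam q y) * (2 * q' y)) / ((2 * q y) * (2 * q y)) = - g1 y"
      unfolding g1_def using qy by (simp add: field_simps power2_eq_square)
    ultimately show ?thesis by simp
  qed
  have g1pos: "g1 y > 0" if "y \<ge> A1" for y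
  proof -
    have "\<bar>q' y / (q y)^2\<bar> < 1" using A1 that by auto
    then have "q' y / (q y)^2 > -1" by (simp only: abs_less_iff) auto
    moreover have "q' y / (2 * (q y)^2) = (q' y / (q y)^2) / 2" by simp
    ultimately have "q' y / (2 * (q y)^2) > -1/2" by linarith
    then show ?thesis unfolding g1_def by (intro mult_pos_pos) auto
  qed
  have qnz: "q y \<noteq> 0" if "y \<ge> A1" for y using A0(2)[of y] A1 that by auto
  have g1cont: "continuous_on {A1..} g1"
    unfolding g1_def using A1 A0 qnz
    by (intro continuous_intros gamcont_on q'cont' qcont') auto
  have Ebound: "exp (- gam q y) \<le> exp (- gam q A0)" if "y \<ge> A0" for y
    using gam_mono[of A0 y] A0 that by auto
  have G1lim: "(G1 \<longlongrightarrow> 0) at_top"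
  proof (rule tendsto_sandwich[where f="\<lambda>_. 0" and h="\<lambda>y. exp (- gam q A0) * inverse (q y)"])
    show "eventually (\<lambda>y. 0 \<le> G1 y) at_top"
      unfolding eventually_at_top_linorder G1_def
      by (intro exI[of _ A0] allI impI divide_nonneg_pos) (auto dest: A0(2))
    show "eventually (\<lambda>y. G1 y \<le> exp (- gam q A0) * inverse (q y)) at_top"
      unfolding eventually_at_top_linorder
    proof (intro exI[of _ A0] allI impI)
      fix y assume y: "y \<ge> A0"
      have qy: "q y \<ge> 1" using A0 y by auto
      have "G1 y \<le> exp (- gam q y) / q y" unfolding G1_def using qy
        by (intro divide_left_mono) auto
      also have "\<dots> \<le> exp (- gam q A0) / q y" using Ebound[OF y] qy by (intro divide_right_mono) auto
      finally show "G1 y \<le> exp (- gam q A0) * inverse (q y)" by (simp add: divide_inverse)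
    qed
    show "((\<lambda>y. exp (- gam q A0) * inverse (q y)) \<longlongrightarrow> 0) at_top"
      by (rule tendsto_mult_right_zero[OF tendsto_inverse_0_at_top[OF H2_q]])
  qed simp
  have int1: "(g1 has_integral G1 z) {z..}" if "z \<ge> A1" for z
    by (rule ftc_inf) (use der that g1pos G1lim in \<open>auto intro: continuous_on_subset[OF g1cont] less_imp_le\<close>)
  have lim1: "((\<lambda>y. exp (- gam q y) / g1 y) \<longlongrightarrow> 1) at_top"
  proof -
    have "((\<lambda>y. 1 / (1 + (q' y / (q y)^2) / 2)) \<longlongrightarrow> 1 / (1 + 0 / 2)) at_top"
      by (intro tendsto_intros H2_q') auto
    then show ?thesis
      by (simp add: g1_def mult.commute)
  qed
  have "eventually (\<lambda>z. g1 integrable_on {z..}) at_top \<and>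
         ((\<lambda>z. integral {z..} (\<lambda>t. exp (- gam q t)) / integral {z..} g1) \<longlongrightarrow> 1) at_top"
    by (rule compare[of A1]) (use A1 A0 Econt Eint g1cont g1pos lim1 in auto)
  then have L: "((\<lambda>z. integral {z..} (\<lambda>t. exp (- gam q t)) / integral {z..} g1) \<longlongrightarrow> 1) at_top" by simp
  show ?thesis
  proof (rule Lim_transform_eventually[OF L])
    show "\<forall>\<^sub>F z in at_top. integral {z..} (\<lambda>t. exp (- gam q t)) / integral {z..} g1 =
       2 * q z * exp (gam q z) * tailE q z"
      unfolding eventually_at_top_linorder
    proof (intro exI[of _ A1] allI impI)
      fix z assume z: "z \<ge> A1"
      have qz: "q z \<ge> 1" using z A1 A0 by auto
      have "integral {z..} g1 = G1 z" using int1[OF z] by (rule integral_unique)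
      moreover have "integral {z..} (\<lambda>t. exp (- gam q t)) = tailE q z" by (simp add: tailE_def)
      moreover have "tailE q z / G1 z = 2 * q z * exp (gam q z) * tailE q z"
        using qz unfolding G1_def by (simp add: exp_minus field_simps)
      ultimately show "integral {z..} (\<lambda>t. exp (- gam q t)) / integral {z..} g1 = 2 * q z * exp (gam q z) * tailE q z"
        by simp
    qed
  qed
qed

lemma part2: "eventually (\<lambda>z. (\<lambda>y. 1 / q y) integrable_on {z..}) at_top \<and>
  ((\<lambda>z. frak_m q z / bigM q z) \<longlongrightarrow> 1) at_top"
proof -
  obtain A0 where A0: "A0 \<ge> 1" "\<And>y. y \<ge> A0 \<Longrightarrow> q y \<ge> 1" using qlarge by auto
  have i0: "(\<lambda>y. exp (gam q y) * tailE q y) integrable_on {A0..}"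
    by (rule int_subset_nonneg[OF H1_outer]) (use A0 Tnn in auto)
  have intf: "(\<lambda>y. 2 * (exp (gam q y) * tailE q y)) integrable_on {A0..}"
    using integrable_on_mult_right[OF i0, of 2] by simp
  have lim: "((\<lambda>y. 2 * (exp (gam q y) * tailE q y) / (1 / q y)) \<longlongrightarrow> 1) at_top"
    using part1 by (simp add: ac_simps)
  have qnz: "q y \<noteq> 0" if "y \<ge> A0" for y using A0(2)[of y] that by auto
  have "eventually (\<lambda>z. (\<lambda>y. 1 / q y) integrable_on {z..}) at_top \<and>
    ((\<lambda>z. integral {z..} (\<lambda>y. 2 * (exp (gam q y) * tailE q y)) / integral {z..} (\<lambda>y. 1 / q y)) \<longlongrightarrow> 1) at_top"
  proof (rule compare[OF _ _ intf _ lim])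
    show "continuous_on {A0..} (\<lambda>y. 2 * (exp (gam q y) * tailE q y))"
      using A0 by (intro continuous_intros expgcont Tcont) auto
    show "continuous_on {A0..} (\<lambda>y. 1 / q y)"
      using A0 qnz by (intro continuous_intros qcont') auto
    show "0 < 2 * (exp (gam q y) * tailE q y) \<and> 0 < 1 / q y" if "A0 \<le> y" for y
      using A0(2)[OF that] Tpos[of y] A0(1) that by auto
  qed
  then show ?thesis by (simp add: frak_m_def bigM_def)
qed

lemma part3: "eventually (\<lambda>z. (\<lambda>y. exp (gam q y) * (tailE q y)\<^sup>2) integrable_on {z..}) at_top \<and>
  ((\<lambda>z. integral {z..} (\<lambda>y. exp (gam q y) * (tailE q y)\<^sup>2)
              / (exp (2 * gam q z) * (tailE q z) ^ 3)) \<longlongrightarrow> 1) at_top"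
proof -
  obtain A0 where A0: "A0 \<ge> 1" "\<And>y. y \<ge> A0 \<Longrightarrow> q y \<ge> 1" using qlarge by auto
  define R where "R y = 2 * q y * exp (gam q y) * tailE q y" for y
  have Rlim: "(R \<longlongrightarrow> 1) at_top" using part1 unfolding R_def[abs_def] .
  have "eventually (\<lambda>y. dist (R y) 1 < 1/4) at_top"
    using Rlim[unfolded tendsto_iff, rule_format, of "1/4"] by simp
  then obtain A3' where A3': "\<And>y. y \<ge> A3' \<Longrightarrow> \<bar>R y - 1\<bar> < 1/4"
    by (auto simp: eventually_at_top_linorder dist_real_def)
  define A3 where "A3 = max A3' A0"
  have A3: "A3 \<ge> A0" "\<And>y. y \<ge> A3 \<Longrightarrow> R y < 5/4"
  proof -
    show "A3 \<ge> A0" unfolding A3_def by auto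
    show "R y < 5/4" if "y \<ge> A3" for y
    proof -
      have "\<bar>R y - 1\<bar> < 1/4" using A3'[of y] that unfolding A3_def by auto
      then show ?thesis by linarith
    qed
  qed
  define h where "h y = exp (gam q y) * (tailE q y)\<^sup>2" for y
  define G3 where "G3 y = exp (2 * gam q y) * tailE q y ^ 3" for y
  define g3 where "g3 y = h y * (3 - 2 * R y)" for y
  have der: "(G3 has_real_derivative - g3 y) (at y)" if "y \<ge> A3" for y
  proof -
    have y0: "y > 0" using that A3 A0 by auto
    have d1: "((\<lambda>t. exp (2 * gam q t)) has_real_derivative exp (2 * gam q y) * (2 * (2 * q y))) (at y)"
      by (intro DERIV_chain2[OF DERIV_exp] DERIV_cmult gamder y0)
    have d2: "((\<lambda>t. tailE q t ^ 3) has_real_derivative of_nat 3 * (- exp (- gam q y) * tailE q y ^ (3 - Suc 0))) (at y)"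
      by (intro DERIV_power Tder y0)
    have ex2: "exp (2 * gam q y) = exp (gam q y) * exp (gam q y)"
      by (simp add: exp_add[symmetric])
    have "exp (2 * gam q y) * (2 * (2 * q y)) * tailE q y ^ 3 + of_nat 3 * (- exp (- gam q y) * tailE q y ^ (3 - Suc 0)) * exp (2 * gam q y) = - g3 y"
      unfolding g3_def h_def R_def ex2 by (simp add: exp_minus field_simps power2_eq_square power3_eq_cube)
    then show ?thesis unfolding G3_def by (intro DERIV_cong[OF DERIV_mult[OF d1 d2]])
  qed
  have g3pos: "g3 y > 0" if "y \<ge> A3" for y
  proof -
    have "tailE q y > 0" using Tpos[of y] that A3 A0 by auto
    then have "h y > 0" unfolding h_def by auto
    moreover have "3 - 2 * R y > 0" using A3(2)[OF that] by auto
    ultimately show ?thesis unfolding g3_def by auto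
  qed
  have qnz: "q y \<noteq> 0" if "y \<ge> A3" for y using A0(2)[of y] A3 that by auto
  have hcont: "continuous_on {a..} h" if "a \<ge> A0" for a
    unfolding h_def using that A0 by (intro continuous_intros gamcont_on Tcont) auto
  have g3cont: "continuous_on {A3..} g3"
    unfolding g3_def R_def using A3 A0
    by (intro continuous_intros hcont gamcont_on Tcont qcont') auto
  define V where "V y = exp (gam q y) * tailE q y" for y
  have Vlim: "(V \<longlongrightarrow> 0) at_top"
  proof (rule Lim_transform_eventually)
    have "((\<lambda>y. R y * (1/2) * inverse (q y)) \<longlongrightarrow> 1 * (1/2) * 0) at_top"
      by (intro tendsto_intros Rlim tendsto_inverse_0_at_top[OF H2_q])
    then show "((\<lambda>y. R y * (1/2) * inverse (q y)) \<longlongrightarrow> 0) at_top" by simp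
    show "\<forall>\<^sub>F y in at_top. R y * (1/2) * inverse (q y) = V y"
      unfolding eventually_at_top_linorder
      by (intro exI[of _ A3] allI impI) (use qnz in \<open>auto simp: R_def V_def field_simps\<close>)
  qed
  have Tlim: "(tailE q \<longlongrightarrow> 0) at_top"
  proof (rule tendsto_sandwich[where f="\<lambda>_. 0" and h="\<lambda>y. exp (- gam q A0) * V y"])
    show "eventually (\<lambda>y. 0 \<le> tailE q y) at_top"
      unfolding eventually_at_top_linorder by (intro exI[of _ 0] allI impI Tnn)
    show "eventually (\<lambda>y. tailE q y \<le> exp (- gam q A0) * V y) at_top"
      unfolding eventually_at_top_linorder
    proof (intro exI[of _ A0] allI impI)
      fix y assume y: "y \<ge> A0"
      have "gam q A0 \<le> gam q y" using gam_mono[of A0 y] A0 y by auto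
      then have "exp (- gam q y) \<le> exp (- gam q A0)" by auto
      moreover have "tailE q y = exp (- gam q y) * V y" by (simp add: V_def exp_minus)
      moreover have "V y \<ge> 0" using Tnn[of y] y A0 by (simp add: V_def)
      ultimately show "tailE q y \<le> exp (- gam q A0) * V y" by (simp add: mult_right_mono)
    qed
    show "((\<lambda>y. exp (- gam q A0) * V y) \<longlongrightarrow> 0) at_top"
      using tendsto_mult_right_zero[OF Vlim] by simp
  qed simp
  have G3lim: "(G3 \<longlongrightarrow> 0) at_top"
  proof -
    have "((\<lambda>y. V y ^ 2 * tailE q y) \<longlongrightarrow> 0 ^ 2 * 0) at_top"
      by (intro tendsto_intros Vlim Tlim)
    moreover have "V y ^ 2 * tailE q y = G3 y" for y
      by (simp add: V_def G3_def exp_add[symmetric] power2_eq_square power3_eq_cube)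
    ultimately show ?thesis by simp
  qed
  have int3: "(g3 has_integral G3 z) {z..}" if "z \<ge> A3" for z
    by (rule ftc_inf) (use der that g3pos G3lim in \<open>auto intro: continuous_on_subset[OF g3cont] less_imp_le\<close>)
  have lim3: "((\<lambda>y. g3 y / h y) \<longlongrightarrow> 1) at_top"
  proof (rule Lim_transform_eventually)
    show "((\<lambda>y. 3 - 2 * R y) \<longlongrightarrow> 1) at_top"
    proof -
      have "((\<lambda>y. 3 - 2 * R y) \<longlongrightarrow> 3 - 2 * 1) at_top" by (intro tendsto_intros Rlim)
      then show ?thesis by simp
    qed
    show "\<forall>\<^sub>F y in at_top. 3 - 2 * R y = g3 y / h y"
      unfolding eventually_at_top_linorder
    proof (intro exI[of _ A3] allI impI)
      fix y assume "y \<ge> A3"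
      then have "tailE q y > 0" using Tpos[of y] A3 A0 by auto
      then have "h y \<noteq> 0" unfolding h_def by auto
      then show "3 - 2 * R y = g3 y / h y" unfolding g3_def by simp
    qed
  qed
  have "eventually (\<lambda>z. h integrable_on {z..}) at_top \<and>
         ((\<lambda>z. integral {z..} g3 / integral {z..} h) \<longlongrightarrow> 1) at_top"
  proof (rule compare[OF g3cont _ _ _ lim3])
    show "continuous_on {A3..} h" using A3 by (intro hcont)
    show "g3 integrable_on {A3..}" using int3[of A3] by blast
    show "0 < g3 y \<and> 0 < h y" if "A3 \<le> y" for y
    proof -
      have "tailE q y > 0" using Tpos[of y] that A3 A0 by auto
      then show ?thesis using g3pos[OF that] unfolding h_def by auto
    qed
  qed
  then have E1: "eventually (\<lambda>z. h integrable_on {z..}) at_top"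
    and L: "((\<lambda>z. integral {z..} g3 / integral {z..} h) \<longlongrightarrow> 1) at_top" by auto
  have L2: "((\<lambda>z. G3 z / integral {z..} h) \<longlongrightarrow> 1) at_top"
  proof (rule Lim_transform_eventually[OF L])
    show "\<forall>\<^sub>F z in at_top. integral {z..} g3 / integral {z..} h = G3 z / integral {z..} h"
      unfolding eventually_at_top_linorder
      by (intro exI[of _ A3] allI impI) (use int3 in \<open>simp add: integral_unique\<close>)
  qed
  have "((\<lambda>z. inverse (G3 z / integral {z..} h)) \<longlongrightarrow> inverse 1) at_top"
    by (rule tendsto_inverse[OF L2]) simp
  then have "((\<lambda>z. integral {z..} h / G3 z) \<longlongrightarrow> 1) at_top" by simp
  then show ?thesis using E1 unfolding h_def[abs_def] G3_def[abs_def] by simp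
qed

lemma part4: "eventually (\<lambda>z. (\<lambda>y. exp (gam q y) *
              integral {y..} (\<lambda>\<eta>. exp (gam q \<eta>) * (tailE q \<eta>)\<^sup>2)) integrable_on {z..}) at_top \<and>
    (eventually (\<lambda>z. (\<lambda>y. 1 / (q y) ^ 3) integrable_on {z..}) at_top) \<and>
    (((\<lambda>z. 8 * integral {z..} (\<lambda>y. exp (gam q y) *
              integral {y..} (\<lambda>\<eta>. exp (gam q \<eta>) * (tailE q \<eta>)\<^sup>2))
              / integral {z..} (\<lambda>y. 1 / (q y) ^ 3)) \<longlongrightarrow> 1) at_top)"
proof -
  obtain A0 where A0: "A0 \<ge> 1" "\<And>y. y \<ge> A0 \<Longrightarrow> q y \<ge> 1" using qlarge by auto
  define h where "h y = exp (gam q y) * (tailE q y)\<^sup>2" for y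
  define S where "S y = integral {y..} h" for y
  define R where "R y = 2 * q y * exp (gam q y) * tailE q y" for y
  have Rlim: "(R \<longlongrightarrow> 1) at_top" using part1 unfolding R_def[abs_def] .
  have P3: "eventually (\<lambda>z. h integrable_on {z..}) at_top"
    and L3: "((\<lambda>z. S z / (exp (2 * gam q z) * (tailE q z) ^ 3)) \<longlongrightarrow> 1) at_top"
    using part3 unfolding h_def[abs_def] S_def by auto
  obtain B4 where B4: "\<And>z. z \<ge> B4 \<Longrightarrow> h integrable_on {z..}"
    using P3 by (auto simp: eventually_at_top_linorder)
  define A4 where "A4 = max B4 A0"
  have A4: "A4 \<ge> A0" "h integrable_on {A4..}" unfolding A4_def using B4 by auto
  have hpos: "h y > 0" if "y \<ge> A4" for y
    using Tpos[of y] that A4 A0 unfolding h_def by auto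
  have hcont: "continuous_on {A4..} h"
    unfolding h_def using A4 A0 by (intro continuous_intros gamcont_on Tcont) auto
  have Sder: "(S has_real_derivative - h y) (at y)" if "y > A4" for y
    unfolding S_def[abs_def] by (rule tail_deriv[OF hcont A4(2)]) (use hpos that in \<open>auto simp: less_imp_le\<close>)
  have Scont: "continuous_on {A4+1..} S"
    by (intro continuous_at_imp_continuous_on ballI DERIV_isCont[OF Sder]) auto
  have Spos: "S y > 0" if "y \<ge> A4" for y
    unfolding S_def
  proof (rule int_pos)
    show "continuous_on {y..} h" by (rule continuous_on_subset[OF hcont]) (use that in auto)
    show "h integrable_on {y..}"
      by (rule int_subset_nonneg[OF A4(2) _ that]) (use hpos in \<open>auto simp: less_imp_le\<close>)
  qed (use hpos that in auto)
  obtain B2 where B2: "\<And>z. z \<ge> B2 \<Longrightarrow> (\<lambda>y. 1 / q y) integrable_on {z..}"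
    using part2 by (auto simp: eventually_at_top_linorder)
  have iq3: "(\<lambda>y. 1 / (q y) ^ 3) integrable_on {z..}" if "z \<ge> max B2 A0" for z
  proof (rule measurable_bounded_by_integrable_imp_integrable_real)
    have qnz: "q y \<noteq> 0" if "y \<ge> z" for y using A0(2)[of y] that \<open>z \<ge> max B2 A0\<close> by auto
    show "(\<lambda>y. 1 / (q y) ^ 3) \<in> borel_measurable (lebesgue_on {z..})"
      by (rule continuous_imp_measurable_on_sets_lebesgue)
         (use that A0 qnz in \<open>auto intro!: continuous_intros qcont'\<close>)
    show "(\<lambda>y. 1 / q y) integrable_on {z..}" using B2 that by auto
    show "\<bar>1 / (q x) ^ 3\<bar> \<le> 1 / q x" if "x \<in> {z..}" for x
    proof -
      have qx: "q x \<ge> 1" using A0(2)[of x] that \<open>z \<ge> max B2 A0\<close> by auto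
      have "q x * 1 \<le> q x * (q x)^2" using qx by (intro mult_left_mono) (auto simp: one_le_power)
      then have "q x \<le> (q x) ^ 3" by (simp add: power3_eq_cube power2_eq_square)
      then show ?thesis using qx by (simp add: frac_le)
    qed
  qed auto
  define A6 where "A6 = max (max B2 A0) (A4 + 1)"
  have A6: "A6 \<ge> A0" "A6 \<ge> A4 + 1" "A6 \<ge> max B2 A0" unfolding A6_def by auto
  have key: "((\<lambda>y. 8 * (q y)^3 * (exp (gam q y) * S y)) \<longlongrightarrow> 1) at_top"
  proof (rule Lim_transform_eventually)
    have "((\<lambda>y. R y ^ 3 * (S y / (exp (2 * gam q y) * (tailE q y) ^ 3))) \<longlongrightarrow> 1 ^ 3 * 1) at_top"
      by (intro tendsto_intros Rlim L3)
    then show "((\<lambda>y. R y ^ 3 * (S y / (exp (2 * gam q y) * (tailE q y) ^ 3))) \<longlongrightarrow> 1) at_top" by simp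
    show "\<forall>\<^sub>F y in at_top. R y ^ 3 * (S y / (exp (2 * gam q y) * (tailE q y) ^ 3)) = 8 * (q y)^3 * (exp (gam q y) * S y)"
      unfolding eventually_at_top_linorder
    proof (intro exI[of _ A0] allI impI)
      fix y assume y: "y \<ge> A0"
      have T: "tailE q y > 0" using Tpos[of y] y A0 by auto
      have ex2: "exp (2 * gam q y) = exp (gam q y) * exp (gam q y)"
        by (simp add: exp_add[symmetric])
      show "R y ^ 3 * (S y / (exp (2 * gam q y) * (tailE q y) ^ 3)) = 8 * (q y)^3 * (exp (gam q y) * S y)"
        unfolding R_def ex2 using T by (simp add: field_simps power3_eq_cube)
    qed
  qed
  have lim: "((\<lambda>y. (1 / (q y)^3) / (8 * (exp (gam q y) * S y))) \<longlongrightarrow> 1) at_top"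
  proof -
    have "((\<lambda>y. inverse (8 * (q y)^3 * (exp (gam q y) * S y))) \<longlongrightarrow> inverse 1) at_top"
      by (rule tendsto_inverse[OF key]) simp
    then show ?thesis by (simp add: field_simps)
  qed
  have "eventually (\<lambda>z. (\<lambda>y. 8 * (exp (gam q y) * S y)) integrable_on {z..}) at_top \<and>
         ((\<lambda>z. integral {z..} (\<lambda>y. 1 / (q y)^3) / integral {z..} (\<lambda>y. 8 * (exp (gam q y) * S y))) \<longlongrightarrow> 1) at_top"
  proof (rule compare[OF _ _ iq3[OF A6(3)] _ lim])
    show "continuous_on {A6..} (\<lambda>y. 1 / q y ^ 3)"
    proof -
      have "q y \<noteq> 0" if "y \<ge> A6" for y using A0(2)[of y] A6 that by auto
      then show ?thesis using A6 A0 by (intro continuous_intros qcont') auto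
    qed
    show "continuous_on {A6..} (\<lambda>y. 8 * (exp (gam q y) * S y))"
      using A6 A0 by (intro continuous_intros expgcont continuous_on_subset[OF Scont]) auto
    show "0 < 1 / q y ^ 3 \<and> 0 < 8 * (exp (gam q y) * S y)" if "A6 \<le> y" for y
      using A0(2)[of y] Spos[of y] that A6 by auto
  qed
  then have E: "eventually (\<lambda>z. (\<lambda>y. 8 * (exp (gam q y) * S y)) integrable_on {z..}) at_top"
    and L: "((\<lambda>z. integral {z..} (\<lambda>y. 1 / (q y)^3) / integral {z..} (\<lambda>y. 8 * (exp (gam q y) * S y))) \<longlongrightarrow> 1) at_top"
    by auto
  have "((\<lambda>z. inverse (integral {z..} (\<lambda>y. 1 / (q y)^3) / integral {z..} (\<lambda>y. 8 * (exp (gam q y) * S y)))) \<longlongrightarrow> inverse 1) at_top"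
    by (rule tendsto_inverse[OF L]) simp
  then have L': "((\<lambda>z. 8 * integral {z..} (\<lambda>y. exp (gam q y) * S y) / integral {z..} (\<lambda>y. 1 / (q y)^3)) \<longlongrightarrow> 1) at_top"
    by simp
  have E': "eventually (\<lambda>z. (\<lambda>y. exp (gam q y) * S y) integrable_on {z..}) at_top"
    using E by simp
  have E3: "eventually (\<lambda>z. (\<lambda>y. 1 / (q y) ^ 3) integrable_on {z..}) at_top"
    unfolding eventually_at_top_linorder by (intro exI[of _ "max B2 A0"] allI impI iq3)
  show ?thesis using E' E3 L' unfolding S_def h_def by simp
qed

end

theorem corollaryA2:
  fixes q q' :: "real \<Rightarrow> real"
  assumes C1_deriv: "\<And>x. x \<ge> 0 \<Longrightarrow> (q has_real_derivative q' x) (at x within {0..})"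
    and C1_cont: "continuous_on {0..} q'"
    and H1_inner: "(\<lambda>\<xi>. exp (- gam q \<xi>)) integrable_on {0..}"
    and H1_outer: "(\<lambda>y. exp (gam q y) * tailE q y) integrable_on {0..}"
    and H2_q: "filterlim q at_top at_top"
    and H2_q': "((\<lambda>x. q' x / (q x)\<^sup>2) \<longlongrightarrow> 0) at_top"
  shows "(((\<lambda>z. 2 * q z * exp (gam q z) * tailE q z) \<longlongrightarrow> 1) at_top) \<and>
    (eventually (\<lambda>z. (\<lambda>y. 1 / q y) integrable_on {z..}) at_top) \<and>
    (((\<lambda>z. frak_m q z / bigM q z) \<longlongrightarrow> 1) at_top) \<and>
    (eventually (\<lambda>z. (\<lambda>y. exp (gam q y) * (tailE q y)\<^sup>2) integrable_on {z..}) at_top) \<and>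
    (((\<lambda>z. integral {z..} (\<lambda>y. exp (gam q y) * (tailE q y)\<^sup>2)
              / (exp (2 * gam q z) * (tailE q z) ^ 3)) \<longlongrightarrow> 1) at_top) \<and>
    (eventually (\<lambda>z. (\<lambda>y. exp (gam q y) *
              integral {y..} (\<lambda>\<eta>. exp (gam q \<eta>) * (tailE q \<eta>)\<^sup>2)) integrable_on {z..}) at_top) \<and>
    (eventually (\<lambda>z. (\<lambda>y. 1 / (q y) ^ 3) integrable_on {z..}) at_top) \<and>
    (((\<lambda>z. 8 * integral {z..} (\<lambda>y. exp (gam q y) *
              integral {y..} (\<lambda>\<eta>. exp (gam q \<eta>) * (tailE q \<eta>)\<^sup>2))
              / integral {z..} (\<lambda>y. 1 / (q y) ^ 3)) \<longlongrightarrow> 1) at_top)"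
proof -
  interpret setting q q'
    by unfold_locales (use assms in auto)
  show ?thesis using part1 part2 part3 part4 by blast
qed

end
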